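(* Let $\alpha=(a_1,\dots,a_w)$ have $m$ nonempty horizontal lists, and let $1\le t<m$. (1) For every $a_i\in\mathrm{Left}(\mathbb{L}^t_\alpha)$, if $dn_\alpha(a_i)$ exists then $dn_\alpha(a_i)\in\mathrm{Left}(\mathbb{L}^{t+1}_\alpha)$. (2) For every $a_i\in\mathrm{Right}(\mathbb{L}^{t+1}_\alpha)$, $un_\alpha(a_i)\in\mathrm{Right}(\mathbb{L}^t_\alpha)$.
   Context: Let $\alpha=(a_1,\dots,a_w)$ be a finite sequence of real numbers, with items identified by their positions. Increasing subsequences are non-strict. $RL_\alpha(a)$ is the maximum length of an increasing subsequence ending at $a$. The horizontal list $\mathbb{L}^t_\alpha$ is the list of items of rising length $t$, ordered by position. The up neighbor $un_\alpha(a_i)$ (resp. down neighbor $dn_\alpha(a_i)$) is the item $a_j$ with the largest $j<i$ such that $RL_\alpha(a_j)=RL_\alpha(a_i)-1$ (resp. $+1$), if any. Further, $un^0_\alpha(a)=a$ and $un^k_\alpha=un_\alpha\circ un^{k-1}_\alpha$. $\mathrm{Left}(\mathbb{L}^t_\alpha)$ is the sublist of items $a\in\mathbb{L}^t_\alpha$ with $un^{t-1}_\alpha(a)=a_1$, and $\mathrm{Right}(\mathbb{L}^t_\alpha)$ is the sublist of the remaining items. *)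

theory Defs
  imports Complex_Main
begin

text \<open>Positions are 0-based: item a_i of the paper is position i-1 of the list alpha.\<close>

definition inc_subseq_ending :: "real list \<Rightarrow> nat list \<Rightarrow> nat \<Rightarrow> bool" where
  "inc_subseq_ending alpha js i \<longleftrightarrow>
     js \<noteq> [] \<and> sorted_wrt (<) js \<and> set js \<subseteq> {..<length alpha} \<and> last js = i
     \<and> sorted (map (\<lambda>j. alpha ! j) js)"

definition RL :: "real list \<Rightarrow> nat \<Rightarrow> nat" where
  "RL alpha i = Max {length js | js. inc_subseq_ending alpha js i}"

text \<open>Horizontal list L^t (as a set of positions; its order is the order of positions).\<close>
definition hlist :: "real list \<Rightarrow> nat \<Rightarrow> nat set" where
  "hlist alpha t = {i. i < length alpha \<and> RL alpha i = t}"

definition num_hlists :: "real list \<Rightarrow> nat" where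
  "num_hlists alpha = card {t. hlist alpha t \<noteq> {}}"

definition un :: "real list \<Rightarrow> nat \<Rightarrow> nat option" where
  "un alpha i = (if \<exists>j<i. RL alpha j + 1 = RL alpha i
                 then Some (GREATEST j. j < i \<and> RL alpha j + 1 = RL alpha i) else None)"

definition dn :: "real list \<Rightarrow> nat \<Rightarrow> nat option" where
  "dn alpha i = (if \<exists>j<i. RL alpha j = RL alpha i + 1
                 then Some (GREATEST j. j < i \<and> RL alpha j = RL alpha i + 1) else None)"

fun un_pow :: "real list \<Rightarrow> nat \<Rightarrow> nat \<Rightarrow> nat option" where
  "un_pow alpha 0 i = Some i"
| "un_pow alpha (Suc k) i = Option.bind (un_pow alpha k i) (un alpha)"

definition Left :: "real list \<Rightarrow> nat \<Rightarrow> nat set" where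
  "Left alpha t = {i \<in> hlist alpha t. un_pow alpha (t - 1) i = Some 0}"

definition Right :: "real list \<Rightarrow> nat \<Rightarrow> nat set" where
  "Right alpha t = {i \<in> hlist alpha t. un_pow alpha (t - 1) i \<noteq> Some 0}"

end

theory Submission
  imports Defs
begin

lemma ise_len: "inc_subseq_ending alpha js i \<Longrightarrow> length js \<le> length alpha"
proof -
  assume a: "inc_subseq_ending alpha js i"
  hence d: "distinct js" unfolding inc_subseq_ending_def by (metis strict_sorted_iff)
  have "length js = card (set js)" using d by (simp add: distinct_card)
  also have "\<dots> \<le> card {..<length alpha}"
    using a unfolding inc_subseq_ending_def by (intro card_mono) auto
  finally show ?thesis by simp
qed

lemma RL_fin: "finite {length js | js. inc_subseq_ending alpha js i}"
  by (rule finite_subset[of _ "{..length alpha}"]) (auto dest: ise_len)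

lemma RL_ge: "inc_subseq_ending alpha js i \<Longrightarrow> length js \<le> RL alpha i"
  unfolding RL_def by (rule Max_ge[OF RL_fin]) auto

lemma RL_ex: "i < length alpha \<Longrightarrow> \<exists>js. inc_subseq_ending alpha js i \<and> length js = RL alpha i"
proof -
  assume i: "i < length alpha"
  have "inc_subseq_ending alpha [i] i" using i unfolding inc_subseq_ending_def by auto
  hence ne: "{length js | js. inc_subseq_ending alpha js i} \<noteq> {}" by blast
  from Max_in[OF RL_fin ne] show ?thesis unfolding RL_def by auto
qed

lemma RL_pos: "i < length alpha \<Longrightarrow> RL alpha i \<ge> 1"
  using RL_ex[of i alpha] unfolding inc_subseq_ending_def by (metis One_nat_def length_greater_0_conv Suc_leI)

lemma sorted_last_le: "sorted xs \<Longrightarrow> xs \<noteq> [] \<Longrightarrow> x \<in> set xs \<Longrightarrow> x \<le> last xs"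
  by (induction xs rule: rev_induct) (auto simp: sorted_append)

lemma ise_ext:
  assumes "inc_subseq_ending alpha js p" "p < i" "i < length alpha" "alpha!p \<le> alpha!i"
  shows "inc_subseq_ending alpha (js@[i]) i"
proof -
  have js: "js \<noteq> []" "sorted_wrt (<) js" "set js \<subseteq> {..<length alpha}" "last js = p"
    "sorted (map (\<lambda>j. alpha ! j) js)" using assms(1) unfolding inc_subseq_ending_def by auto
  have "\<forall>x\<in>set js. x \<le> p"
  proof -
    obtain bs where "js = bs @ [p]" using js(1,4) by (metis append_butlast_last_id)
    thus ?thesis using js(2) by (auto simp: sorted_wrt_append)
  qed
  hence lt: "\<forall>x\<in>set js. x < i" using assms(2) by auto
  have "\<forall>x\<in>set js. alpha!x \<le> alpha!p"
  proof
    fix x assume "x \<in> set js"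
    hence "alpha!x \<in> set (map (\<lambda>j. alpha ! j) js)" by simp
    from sorted_last_le[OF js(5) _ this] js(1,4) show "alpha!x \<le> alpha!p" by (simp add: last_map)
  qed
  thus ?thesis using js lt assms unfolding inc_subseq_ending_def
    by (auto simp: sorted_wrt_append sorted_append)
qed

lemma ise_butlast:
  assumes "inc_subseq_ending alpha js i" "length js \<ge> 2"
  shows "\<exists>p. p < i \<and> alpha!p \<le> alpha!i \<and> inc_subseq_ending alpha (butlast js) p"
proof -
  obtain bs p q where e: "js = bs @ [p, q]"
  proof -
    obtain cs q where c: "js = cs @ [q]" using assms(2) by (cases js rule: rev_cases) auto
    then obtain bs p where "cs = bs @ [p]" using assms(2) by (cases cs rule: rev_cases) auto
    thus ?thesis using c that by auto
  qed
  show ?thesis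
    using assms(1) unfolding e inc_subseq_ending_def
    by (auto simp: sorted_wrt_append sorted_append butlast_append)
qed

lemma greatest_below:
  assumes "\<exists>j<(i::nat). Q j"
  shows "(GREATEST j. j<i \<and> Q j) < i \<and> Q (GREATEST j. j<i \<and> Q j)"
proof -
  obtain k where "k < i" "Q k" using assms by blast
  thus ?thesis using GreatestI_nat[of "\<lambda>j. j<i \<and> Q j" k i] by auto
qed

lemma greatest_below_le:
  assumes "k < (i::nat)" "Q k"
  shows "k \<le> (GREATEST j. j<i \<and> Q j)"
  using Greatest_le_nat[of "\<lambda>j. j<i \<and> Q j" k i] assms by auto

lemma un_Some:
  assumes "i < length alpha" "RL alpha i \<ge> 2"
  shows "\<exists>j. un alpha i = Some j \<and> j < i \<and> RL alpha j + 1 = RL alpha i"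
proof -
  obtain js where js: "inc_subseq_ending alpha js i" "length js = RL alpha i" using RL_ex[OF assms(1)] by blast
  obtain p where p: "p < i" "alpha!p \<le> alpha!i" "inc_subseq_ending alpha (butlast js) p"
    using ise_butlast[OF js(1)] js(2) assms(2) by auto
  have ge: "RL alpha i - 1 \<le> RL alpha p" using RL_ge[OF p(3)] js(2) by simp
  have pl: "p < length alpha" using p(1) assms(1) by simp
  obtain ks where ks: "inc_subseq_ending alpha ks p" "length ks = RL alpha p" using RL_ex[OF pl] by blast
  have "length (ks@[i]) \<le> RL alpha i" using RL_ge[OF ise_ext[OF ks(1) p(1) assms(1) p(2)]] .
  hence "RL alpha p + 1 = RL alpha i" using ge ks(2) assms(2) by simp
  hence ex: "\<exists>j<i. RL alpha j + 1 = RL alpha i" using p(1) by blast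
  let ?g = "GREATEST j. j < i \<and> RL alpha j + 1 = RL alpha i"
  have "?g < i \<and> RL alpha ?g + 1 = RL alpha i"
    by (rule greatest_below[OF ex])
  thus ?thesis using ex unfolding un_def by auto
qed

lemma un_mono:
  assumes "k \<le> i" "RL alpha k = RL alpha i" "un alpha k = Some a" "un alpha i = Some b"
  shows "a \<le> b"
proof -
  have ek: "\<exists>j<k. RL alpha j + 1 = RL alpha k"
  proof (rule ccontr)
    assume h: "\<not> (\<exists>j<k. RL alpha j + 1 = RL alpha k)"
    have "un alpha k = None" unfolding un_def using h by (rule if_not_P)
    thus False using assms(3) by simp
  qed
  have a: "a = (GREATEST j. j < k \<and> RL alpha j + 1 = RL alpha k)"
  proof -
    have "un alpha k = Some (GREATEST j. j < k \<and> RL alpha j + 1 = RL alpha k)" unfolding un_def by (rule if_P[OF ek])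
    thus ?thesis using assms(3) by simp
  qed
  have ei: "\<exists>j<i. RL alpha j + 1 = RL alpha i"
  proof (rule ccontr)
    assume h: "\<not> (\<exists>j<i. RL alpha j + 1 = RL alpha i)"
    have "un alpha i = None" unfolding un_def using h by (rule if_not_P)
    thus False using assms(4) by simp
  qed
  have b: "b = (GREATEST j. j < i \<and> RL alpha j + 1 = RL alpha i)"
  proof -
    have "un alpha i = Some (GREATEST j. j < i \<and> RL alpha j + 1 = RL alpha i)" unfolding un_def by (rule if_P[OF ei])
    thus ?thesis using assms(4) by simp
  qed
  have "a < k \<and> RL alpha a + 1 = RL alpha k" unfolding a
    by (rule greatest_below[OF ek])
  hence "a < i \<and> RL alpha a + 1 = RL alpha i" using assms(1,2) by simp
  thus ?thesis unfolding b
    using greatest_below_le[where Q="\<lambda>j. RL alpha j + 1 = RL alpha i" and k=a and i=i] by simp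
qed

lemma un_pow_Suc': "un_pow alpha (Suc n) i = Option.bind (un alpha i) (un_pow alpha n)"
proof (induction n arbitrary: i)
  case 0 thus ?case by (cases "un alpha i") auto
next
  case (Suc n)
  have "un_pow alpha (Suc (Suc n)) i = Option.bind (un_pow alpha (Suc n) i) (un alpha)" by simp
  also have "\<dots> = Option.bind (Option.bind (un alpha i) (un_pow alpha n)) (un alpha)" using Suc by simp
  also have "\<dots> = Option.bind (un alpha i) (\<lambda>y. un_pow alpha (Suc n) y)" by (simp add: Option.bind_assoc)
  finally show ?case .
qed

lemma un_pow_Some:
  assumes "i < length alpha" "n < RL alpha i"
  shows "\<exists>x. un_pow alpha n i = Some x \<and> x < length alpha \<and> RL alpha x + n = RL alpha i"
  using assms
proof (induction n)
  case 0 thus ?case by simp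
next
  case (Suc n)
  then obtain x where x: "un_pow alpha n i = Some x" "x < length alpha" "RL alpha x + n = RL alpha i" by auto
  obtain j where j: "un alpha x = Some j" "j < x" "RL alpha j + 1 = RL alpha x"
    using un_Some[OF x(2)] x(3) Suc.prems by auto
  show ?case using x j by auto
qed

lemma un_pow_mono:
  assumes "k \<le> i" "i < length alpha" "RL alpha k = RL alpha i" "n < RL alpha i"
    "un_pow alpha n k = Some a" "un_pow alpha n i = Some b"
  shows "a \<le> b \<and> RL alpha a = RL alpha b"
  using assms(4-6)
proof (induction n arbitrary: a b)
  case 0 thus ?case using assms by auto
next
  case (Suc n)
  obtain x where x: "un_pow alpha n k = Some x" "x < length alpha" "RL alpha x + n = RL alpha k"
    using un_pow_Some[of k alpha n] assms Suc.prems by auto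
  obtain y where y: "un_pow alpha n i = Some y" "y < length alpha" "RL alpha y + n = RL alpha i"
    using un_pow_Some[of i alpha n] assms Suc.prems by auto
  have xy: "x \<le> y" "RL alpha x = RL alpha y" using Suc.IH[OF _ x(1) y(1)] Suc.prems by auto
  have "un alpha x = Some a" "un alpha y = Some b" using Suc.prems x(1) y(1) by auto
  moreover have "RL alpha a + 1 = RL alpha x" "RL alpha b + 1 = RL alpha y"
    using calculation un_Some[OF x(2)] un_Some[OF y(2)] x(3) y(3) Suc.prems assms(3) by auto
  ultimately show ?case using un_mono[OF xy] xy by auto
qed

theorem lemma5:
  fixes alpha :: "real list" and m t :: nat
  assumes "num_hlists alpha = m" and "1 \<le> t" and "t < m"
  shows "(\<forall>i \<in> Left alpha t. \<forall>j. dn alpha i = Some j \<longrightarrow> j \<in> Left alpha (t + 1))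
       \<and> (\<forall>i \<in> Right alpha (t + 1). \<exists>j. un alpha i = Some j \<and> j \<in> Right alpha t)"
proof (intro conjI ballI allI impI)
  fix i j assume iL: "i \<in> Left alpha t" and dj: "dn alpha i = Some j"
  have i: "i < length alpha" "RL alpha i = t" "un_pow alpha (t - 1) i = Some 0"
    using iL unfolding Left_def hlist_def by auto
  have ex: "\<exists>j<i. RL alpha j = RL alpha i + 1"
  proof (rule ccontr)
    assume h: "\<not> (\<exists>j<i. RL alpha j = RL alpha i + 1)"
    have "dn alpha i = None" unfolding dn_def using h by (rule if_not_P)
    thus False using dj by simp
  qed
  have jd: "j = (GREATEST j. j < i \<and> RL alpha j = RL alpha i + 1)"
  proof -
    have "dn alpha i = Some (GREATEST j. j < i \<and> RL alpha j = RL alpha i + 1)" unfolding dn_def by (rule if_P[OF ex])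
    thus ?thesis using dj by simp
  qed
  have j: "j < i" "RL alpha j = t + 1" unfolding jd
    using greatest_below[OF ex] i(2) by auto
  have jl: "j < length alpha" using j i by simp
  obtain k where k: "un alpha j = Some k" "k < j" "RL alpha k + 1 = RL alpha j"
    using un_Some[OF jl] j assms(2) by auto
  have kl: "k < length alpha" using k jl by simp
  obtain a where a: "un_pow alpha (t-1) k = Some a" using un_pow_Some[OF kl, of "t-1"] k j assms(2) by auto
  have "a \<le> 0" using un_pow_mono[of k i alpha "t-1" a 0] k j i a assms(2) by auto
  hence "un_pow alpha t j = Some 0"
    using un_pow_Suc'[of alpha "t-1" j] k a assms(2) by simp
  thus "j \<in> Left alpha (t + 1)" unfolding Left_def hlist_def using jl j by simp
next
  fix i assume iR: "i \<in> Right alpha (t + 1)"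
  have i: "i < length alpha" "RL alpha i = t + 1" "un_pow alpha t i \<noteq> Some 0"
    using iR unfolding Right_def hlist_def by auto
  obtain j where j: "un alpha i = Some j" "j < i" "RL alpha j + 1 = RL alpha i"
    using un_Some[OF i(1)] i assms(2) by auto
  have "un_pow alpha (t-1) j \<noteq> Some 0"
    using un_pow_Suc'[of alpha "t-1" i] j i assms(2) by simp
  thus "\<exists>j. un alpha i = Some j \<and> j \<in> Right alpha t"
    using j i unfolding Right_def hlist_def by auto
qed

end
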